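(* Let $F$ be a field of characteristic zero, $n,m$ natural numbers, $1\le u\le n$ and $1\le j\le n+m$. Let $l=\sum c_{\alpha,\beta}e^{\alpha}x^{\beta}\partial_j$ be a nonzero element of $W(n,m)$ (finite sum, $c_{\alpha,\beta}\in F$) such that every $\alpha=(a_1,\dots,a_n)$ with some $c_{\alpha,\beta}\neq0$ has $a_u\neq0$. Then $[\partial_u,l]\neq0$.
   Context: $W(n,m)$ has basis $e^{\alpha}x^{\beta}\partial_i$ ($\alpha\in\mathbb Z^n$, $\beta\in\mathbb Z^{n+m}$, $1\le i\le n+m$), realized as vector fields $f\partial_i$ with $f$ in the commutative algebra with basis $e^{\alpha}x^{\beta}$ (multiplication adding exponents), $\partial_i(e^{\alpha}x^{\beta})=a_ie^{\alpha}x^{\beta}+b_ie^{\alpha}x^{\beta-\epsilon_i}$ with $a_i:=0$ for $i>n$, and bracket $[f\partial_i,g\partial_j]=f\partial_i(g)\partial_j-g\partial_j(f)\partial_i$. *)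

theory Defs
  imports Main
begin

text \<open>Monomials e^alpha x^beta, encoded by exponent vectors alpha, beta :: nat => int.
Indices are 0-based: alpha k for k < n, beta k for k < n+m; all other entries are 0.
An element of the algebra A is a finitely supported coefficient function mon => 'a.\<close>

type_synonym mon = "(nat \<Rightarrow> int) \<times> (nat \<Rightarrow> int)"

definition valid_mon :: "nat \<Rightarrow> nat \<Rightarrow> mon \<Rightarrow> bool" where
  "valid_mon n m \<mu> \<longleftrightarrow> (\<forall>k\<ge>n. fst \<mu> k = 0) \<and> (\<forall>k\<ge>n+m. snd \<mu> k = 0)"

definition supp_A :: "(mon \<Rightarrow> 'a::zero) \<Rightarrow> mon set" where
  "supp_A f = {\<mu>. f \<mu> \<noteq> 0}"

definition Alg :: "nat \<Rightarrow> nat \<Rightarrow> (mon \<Rightarrow> 'a::zero) set" where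
  "Alg n m = {f. finite (supp_A f) \<and> (\<forall>\<mu>\<in>supp_A f. valid_mon n m \<mu>)}"

definition mon_diff :: "mon \<Rightarrow> mon \<Rightarrow> mon" where
  "mon_diff \<mu> \<nu> = ((\<lambda>k. fst \<mu> k - fst \<nu> k), (\<lambda>k. snd \<mu> k - snd \<nu> k))"

definition A_mult :: "(mon \<Rightarrow> 'a::comm_ring_1) \<Rightarrow> (mon \<Rightarrow> 'a) \<Rightarrow> mon \<Rightarrow> 'a" where
  "A_mult f g \<mu> = (\<Sum>\<nu>\<in>supp_A f. f \<nu> * g (mon_diff \<mu> \<nu>))"

definition A_one :: "mon \<Rightarrow> 'a::{zero,one}" where
  "A_one \<mu> = (if \<mu> = ((\<lambda>_. 0), (\<lambda>_. 0)) then 1 else 0)"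

text \<open>Derivation partial_i (0-based i):
  partial_i (e^alpha x^beta) = a_i e^alpha x^beta + b_i e^alpha x^(beta - eps_i), with a_i = 0 for i >= n,
  extended linearly.\<close>
definition A_partial :: "nat \<Rightarrow> nat \<Rightarrow> (mon \<Rightarrow> 'a::comm_ring_1) \<Rightarrow> mon \<Rightarrow> 'a" where
  "A_partial n i f \<mu> =
     (if i < n then of_int (fst \<mu> i) else 0) * f \<mu>
     + of_int (snd \<mu> i + 1) * f (fst \<mu>, (snd \<mu>)(i := snd \<mu> i + 1))"

text \<open>Elements of W(n,m): X = sum_i X_i partial_i, encoded as i |-> X_i (coefficient in A), i < n+m.\<close>
definition Wnm :: "nat \<Rightarrow> nat \<Rightarrow> (nat \<Rightarrow> mon \<Rightarrow> 'a::zero) set" where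
  "Wnm n m = {X. (\<forall>i\<ge>n+m. X i = (\<lambda>_. 0)) \<and> (\<forall>i<n+m. X i \<in> Alg n m)}"

text \<open>Bracket: bilinear extension of [f d_i, g d_j] = f d_i(g) d_j - g d_j(f) d_i.\<close>
definition W_bracket :: "nat \<Rightarrow> nat \<Rightarrow> (nat \<Rightarrow> mon \<Rightarrow> 'a::comm_ring_1)
    \<Rightarrow> (nat \<Rightarrow> mon \<Rightarrow> 'a) \<Rightarrow> nat \<Rightarrow> mon \<Rightarrow> 'a" where
  "W_bracket n m X Y k \<mu> =
     (if k < n + m then
        (\<Sum>i<n+m. A_mult (X i) (A_partial n i (Y k)) \<mu> - A_mult (Y i) (A_partial n i (X k)) \<mu>)
      else 0)"

text \<open>The element f partial_j and the basis element partial_u = e^0 x^0 partial_u.\<close>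
definition W_single :: "nat \<Rightarrow> (mon \<Rightarrow> 'a::zero) \<Rightarrow> nat \<Rightarrow> mon \<Rightarrow> 'a" where
  "W_single j f = (\<lambda>i. if i = j then f else (\<lambda>_. 0))"

end

theory Submission
  imports Defs
begin

lemma supp_zero: "supp_A (\<lambda>_. 0::'a::zero) = {}"
  by (simp add: supp_A_def)

lemma A_mult_zero1: "A_mult (\<lambda>_. 0) g \<mu> = 0"
  by (simp add: A_mult_def supp_zero)

lemma A_mult_zero2: "A_mult f (\<lambda>_. 0) \<mu> = 0"
  by (simp add: A_mult_def)

lemma supp_one: "supp_A (A_one :: mon \<Rightarrow> 'a::comm_ring_1) = {((\<lambda>_. 0), (\<lambda>_. 0))}"
  by (auto simp add: supp_A_def A_one_def)

lemma A_mult_one: "A_mult (A_one :: mon \<Rightarrow> 'a::comm_ring_1) g \<mu> = g \<mu>"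
  by (simp add: A_mult_def supp_one A_one_def mon_diff_def)

lemma A_partial_one: "A_partial n i (A_one :: mon \<Rightarrow> 'a::comm_ring_1) = (\<lambda>_. 0)"
proof
  fix \<mu> :: mon
  have "of_int (snd \<mu> i + 1) * (A_one (fst \<mu>, (snd \<mu>)(i := snd \<mu> i + 1)) :: 'a) = 0"
  proof (cases "snd \<mu> i + 1 = 0")
    case False
    then have "(snd \<mu>)(i := snd \<mu> i + 1) \<noteq> (\<lambda>_. 0)"
      by (metis fun_upd_same)
    then show ?thesis by (simp add: A_one_def)
  qed simp
  moreover have "(if i < n then of_int (fst \<mu> i) else 0) * (A_one \<mu> :: 'a) = 0"
    by (auto simp add: A_one_def)
  ultimately show "A_partial n i (A_one :: mon \<Rightarrow> 'a) \<mu> = 0"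
    by (simp add: A_partial_def)
qed

lemma A_partial_zero: "A_partial n i (\<lambda>_. 0 :: 'a::comm_ring_1) = (\<lambda>_. 0)"
  by (simp add: A_partial_def fun_eq_iff)

theorem lemma3:
  fixes f :: "mon \<Rightarrow> 'a::field_char_0"
    and n m u j :: nat
  assumes "u < n" and "j < n + m"
    and "f \<in> Alg n m"
    and "f \<noteq> (\<lambda>_. 0)"
    and "\<forall>\<mu>\<in>supp_A f. fst \<mu> u \<noteq> 0"
  shows "W_bracket n m (W_single u A_one) (W_single j f) \<noteq> (\<lambda>_ _. 0)"
proof -
  have br: "W_bracket n m (W_single u A_one) (W_single j f) j \<mu> = A_partial n u f \<mu>" for \<mu>
  proof -
    have "W_bracket n m (W_single u A_one) (W_single j f) j \<mu>
        = (\<Sum>i<n+m. if i = u then A_partial n u f \<mu> else 0)"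
      unfolding W_bracket_def using assms(2)
    proof (subst if_P[OF assms(2)], intro sum.cong refl)
      fix i assume "i \<in> {..<n+m}"
      show "A_mult (W_single u A_one i) (A_partial n i (W_single j f j)) \<mu> -
          A_mult (W_single j f i) (A_partial n i (W_single u A_one j)) \<mu> =
          (if i = u then A_partial n u f \<mu> else 0)"
        by (cases "i = u"; cases "i = j"; cases "j = u")
          (simp_all add: W_single_def A_mult_zero1 A_mult_zero2 A_mult_one A_partial_one A_partial_zero)
    qed
    also have "\<dots> = A_partial n u f \<mu>" using assms(1) by simp
    finally show ?thesis .
  qed
  have fin: "finite (supp_A f)" using assms(3) by (simp add: Alg_def)
  have ne: "supp_A f \<noteq> {}" using assms(4) by (auto simp: supp_A_def)
  define M where "M = Max ((\<lambda>\<nu>. snd \<nu> u) ` supp_A f)"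
  have "M \<in> (\<lambda>\<nu>. snd \<nu> u) ` supp_A f" unfolding M_def using fin ne by simp
  then obtain \<mu> where mu: "\<mu> \<in> supp_A f" "snd \<mu> u = M" by auto
  have mx: "\<And>\<nu>. \<nu> \<in> supp_A f \<Longrightarrow> snd \<nu> u \<le> M" unfolding M_def using fin by simp
  have "f (fst \<mu>, (snd \<mu>)(u := snd \<mu> u + 1)) = 0"
  proof (rule ccontr)
    assume "f (fst \<mu>, (snd \<mu>)(u := snd \<mu> u + 1)) \<noteq> 0"
    then have "(fst \<mu>, (snd \<mu>)(u := snd \<mu> u + 1)) \<in> supp_A f" by (simp add: supp_A_def)
    from mx[OF this] mu(2) show False by simp
  qed
  then have "A_partial n u f \<mu> = of_int (fst \<mu> u) * f \<mu>"
    using assms(1) by (simp add: A_partial_def)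
  moreover have "f \<mu> \<noteq> 0" using mu(1) by (simp add: supp_A_def)
  moreover have "fst \<mu> u \<noteq> 0" using assms(5) mu(1) by blast
  ultimately have "A_partial n u f \<mu> \<noteq> 0" by simp
  then show ?thesis using br by (metis)
qed

end
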